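(* Let $A$ be a real matrix with $d_\ell$ columns, $H:=A^\top A$, and suppose $\mu I\preceq H\preceq LI$ for some $0<\mu\le L$. Let $\lambda_s\ge 0$, and for $t=1,\dots,T$ let $b_t$ be vectors (of the row dimension of $A$) and $c_t\in\mathbb{R}^{d_\ell}$. Define $f_t(u)=\frac12\|Au-b_t\|_2^2$, the unanchored minimizer $u_t^\circ:=\arg\min_{u\in\mathbb{R}^{d_\ell}} f_t(u)$ and the anchored minimizer \[ u_t^\star:=\arg\min_{u\in\mathbb{R}^{d_\ell}}\Big\{f_t(u)+\frac{\lambda_s}{2}\|u-c_t\|_2^2\Big\}. \] Then for every $t=2,\dots,T$, \[ \|u_t^\star-u_{t-1}^\star\|_2\le\kappa(\lambda_s)\|u_t^\circ-u_{t-1}^\circ\|_2+\alpha(\lambda_s)\|c_t-c_{t-1}\|_2, \] where \[ \kappa(\lambda_s):=\big\|(H+\lambda_s I)^{-1}H\big\|_{\mathrm{op}}\le\frac{L}{\mu+\lambda_s},\qquad \alpha(\lambda_s):=\big\|\lambda_s(H+\lambda_s I)^{-1}\big\|_{\mathrm{op}}\le\frac{\lambda_s}{\mu+\lambda_s}. \] Consequently, with $V_T^\circ:=\sum_{t=2}^T\|u_t^\circ-u_{t-1}^\circ\|_2$, $V_T^c:=\sum_{t=2}^T\|c_t-c_{t-1}\|_2$ and $V_T^\star:=\sum_{t=2}^T\|u_t^\star-u_{t-1}^\star\|_2$, \[ V_T^\star\le\kappa(\lambda_s)V_T^\circ+\alpha(\lambda_s)V_T^c . \]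
   Context: $\|\cdot\|_2$ is the Euclidean norm, $\|\cdot\|_{\mathrm{op}}$ the operator (spectral) norm, and $\preceq$ the Loewner order on symmetric matrices. *)

theory Defs
  imports "HOL-Analysis.Analysis"
begin

definition loewner_le :: "real^'n^'n \<Rightarrow> real^'n^'n \<Rightarrow> bool" where
  "loewner_le P Q \<longleftrightarrow> (\<forall>x. 0 \<le> x \<bullet> ((Q - P) *v x))"

definition op_norm :: "real^'n^'m \<Rightarrow> real" where
  "op_norm M = onorm (\<lambda>x. M *v x)"

text \<open>The (unique, when it exists) global minimizer of a function.\<close>
definition argmin :: "('a \<Rightarrow> real) \<Rightarrow> 'a" where
  "argmin f = (THE u. \<forall>v. f u \<le> f v)"

end

theory Submission
  imports Defs
begin

lemma inner_At: "(A *v w) \<bullet> y = w \<bullet> (transpose A *v y)" for A :: "real^'n^'m"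
  by (metis dot_lmul_matrix inner_commute transpose_matrix_vector)

lemma inner_H: "x \<bullet> ((transpose A ** A) *v z) = (A *v x) \<bullet> (A *v z)" for A :: "real^'n^'m"
  by (metis inner_At matrix_vector_mul_assoc)

lemma scaleR_mv: "(k *\<^sub>R X) *v x = k *\<^sub>R (X *v x)" for X :: "real^'n^'m"
  by (simp add: vec_eq_iff matrix_vector_mult_def sum_distrib_left algebra_simps)

lemma argmin_char:
  fixes A :: "real^'n^'m" and b :: "real^'m" and c u0 :: "real^'n"
  assumes lam: "0 \<le> lam" and inj: "\<And>w. A *v w = 0 \<Longrightarrow> w = 0"
    and eq: "(transpose A ** A) *v u0 + lam *\<^sub>R u0 = transpose A *v b + lam *\<^sub>R c"
  shows "argmin (\<lambda>u. (1/2)*(norm(A *v u - b))\<^sup>2 + (lam/2)*(norm(u - c))\<^sup>2) = u0"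
proof -
  define g where "g = (\<lambda>u. (1/2)*(norm(A *v u - b))\<^sup>2 + (lam/2)*(norm(u - c))\<^sup>2)"
  have key: "g v = g u0 + (1/2)*(norm(A *v (v - u0)))\<^sup>2 + (lam/2)*(norm(v-u0))\<^sup>2" for v
  proof -
    define w where "w = v - u0"
    have v: "v = w + u0" by (simp add: w_def)
    have e1: "(norm(A *v v - b))\<^sup>2 = (norm (A *v w))\<^sup>2 + 2 * ((A *v w) \<bullet> (A *v u0 - b)) + (norm (A *v u0 - b))\<^sup>2"
      unfolding v by (simp add: matrix_vector_right_distrib power2_norm_eq_inner algebra_simps inner_commute)
    have e2: "(norm(v - c))\<^sup>2 = (norm w)\<^sup>2 + 2 * (w \<bullet> (u0 - c)) + (norm (u0 - c))\<^sup>2"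
      unfolding v by (simp add: power2_norm_eq_inner algebra_simps inner_commute)
    have "(A *v w) \<bullet> (A *v u0 - b) = w \<bullet> ((transpose A ** A) *v u0 - transpose A *v b)"
      by (simp add: inner_At matrix_vector_mult_diff_distrib matrix_vector_mul_assoc)
    also have "\<dots> = - lam * (w \<bullet> (u0 - c))"
    proof -
      have "(transpose A ** A) *v u0 - transpose A *v b = lam *\<^sub>R c - lam *\<^sub>R u0"
        using eq by (simp add: algebra_simps)
      then show ?thesis by (simp only: inner_diff_right inner_scaleR_right) (simp add: algebra_simps)
    qed
    finally have cr: "(A *v w) \<bullet> (A *v u0 - b) = - lam * (w \<bullet> (u0 - c))" .
    show ?thesis unfolding g_def e1 e2 using cr by (simp add: w_def algebra_simps)
  qed
  have min: "g u0 \<le> g v" for v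
    using key[of v] lam by (simp add: add_nonneg_nonneg)
  have "argmin g = u0"
    unfolding argmin_def
  proof (rule the_equality)
    show "\<forall>v. g u0 \<le> g v" using min by blast
  next
    fix u assume "\<forall>v. g u \<le> g v"
    then have "g u \<le> g u0" by blast
    with key[of u] lam have "(1/2)*(norm(A *v (u - u0)))\<^sup>2 + (lam/2)*(norm(u-u0))\<^sup>2 \<le> 0" by simp
    moreover have "0 \<le> (lam/2)*(norm(u-u0))\<^sup>2" using lam by simp
    ultimately have "(norm(A *v (u - u0)))\<^sup>2 \<le> 0" by linarith
    then have "A *v (u - u0) = 0"
      by (metis norm_eq_zero power2_less_eq_zero_iff)
    then show "u = u0" using inj by fastforce
  qed
  then show ?thesis by (simp add: g_def)
qed

theorem propositionC3:
  fixes A :: "real^'n^'m" and \<mu> L lam :: real and T :: nat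
    and b :: "nat \<Rightarrow> real^'m" and c :: "nat \<Rightarrow> real^'n"
  defines "H \<equiv> transpose A ** A"
  defines "f \<equiv> (\<lambda>t u. (1/2) * (norm (A *v u - b t))\<^sup>2)"
  defines "uo \<equiv> (\<lambda>t. argmin (f t))"
  defines "us \<equiv> (\<lambda>t. argmin (\<lambda>u. f t u + (lam / 2) * (norm (u - c t))\<^sup>2))"
  defines "\<kappa> \<equiv> op_norm (matrix_inv (H + lam *\<^sub>R mat 1) ** H)"
  defines "\<alpha> \<equiv> op_norm (lam *\<^sub>R matrix_inv (H + lam *\<^sub>R mat 1))"
  assumes "0 < \<mu>" and "\<mu> \<le> L"
    and "loewner_le (\<mu> *\<^sub>R mat 1) H" and "loewner_le H (L *\<^sub>R mat 1)"
    and "0 \<le> lam"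
  shows "(\<forall>t\<in>{2..T}. norm (us t - us (t-1))
            \<le> \<kappa> * norm (uo t - uo (t-1)) + \<alpha> * norm (c t - c (t-1)))
       \<and> \<kappa> \<le> L / (\<mu> + lam) \<and> \<alpha> \<le> lam / (\<mu> + lam)
       \<and> (\<Sum>t=2..T. norm (us t - us (t-1)))
            \<le> \<kappa> * (\<Sum>t=2..T. norm (uo t - uo (t-1))) + \<alpha> * (\<Sum>t=2..T. norm (c t - c (t-1)))"
  proof -
  note lam = \<open>0 \<le> lam\<close>
  define M where "M = H + lam *\<^sub>R mat 1"
  define Mi where "Mi = matrix_inv M"
  have Mv: "M *v x = H *v x + lam *\<^sub>R x" for x
    by (simp add: M_def matrix_vector_mult_add_rdistrib scaleR_mv)
  have Hq: "x \<bullet> (H *v z) = (A *v x) \<bullet> (A *v z)" for x z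
    unfolding H_def by (rule inner_H)
  have lo: "\<mu> * (norm x)\<^sup>2 \<le> x \<bullet> (H *v x)" for x
  proof -
    have "0 \<le> x \<bullet> ((H - \<mu> *\<^sub>R mat 1) *v x)" using assms(9) unfolding loewner_le_def by blast
    then show ?thesis by (simp add: matrix_vector_mult_diff_rdistrib scaleR_mv inner_diff_right power2_norm_eq_inner)
  qed
  have hi: "x \<bullet> (H *v x) \<le> L * (norm x)\<^sup>2" for x
  proof -
    have "0 \<le> x \<bullet> ((L *\<^sub>R mat 1 - H) *v x)" using assms(10) unfolding loewner_le_def by blast
    then show ?thesis by (simp add: matrix_vector_mult_diff_rdistrib scaleR_mv inner_diff_right power2_norm_eq_inner)
  qed
  have Mlo: "(\<mu> + lam) * (norm x)\<^sup>2 \<le> x \<bullet> (M *v x)" for x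
    using lo[of x] by (simp add: Mv inner_add_right power2_norm_eq_inner algebra_simps)
  have Ainj: "A *v w = 0 \<Longrightarrow> w = 0" for w
  proof -
    assume "A *v w = 0"
    then have "\<mu> * (norm w)\<^sup>2 \<le> 0" using lo[of w] Hq[of w w] by simp
    then show "w = 0" using assms(7)
      by (metis mult_pos_pos norm_eq_zero not_le zero_less_power2)
  qed
  have Minj: "M *v w = 0 \<Longrightarrow> w = 0" for w
  proof -
    assume "M *v w = 0"
    then have "(\<mu> + lam) * (norm w)\<^sup>2 \<le> 0" using Mlo[of w] by simp
    then show "w = 0" using assms(7) lam
      by (metis add_pos_nonneg mult_pos_pos norm_eq_zero not_le zero_less_power2)
  qed
  have "invertible M"
    using Minj by (simp add: invertible_left_inverse matrix_left_invertible_ker)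
  then have MMi: "M ** Mi = mat 1"
    unfolding Mi_def matrix_inv_def invertible_def by (rule someI_ex[where P="\<lambda>A'. M ** A' = mat 1 \<and> A' ** M = mat 1", THEN conjunct1])
  have MMiv: "M *v (Mi *v y) = y" for y
    by (simp add: matrix_vector_mul_assoc MMi)
  have uo_eq: "H *v uo t = transpose A *v b t" for t
  proof -
    define Hi where "Hi = matrix_inv H"
    have "H *v w = 0 \<Longrightarrow> w = 0" for w
      using Ainj Hq[of w w] by simp
    then have "invertible H"
      by (simp add: invertible_left_inverse matrix_left_invertible_ker)
    then have HHi: "H ** Hi = mat 1"
      unfolding Hi_def matrix_inv_def invertible_def by (rule someI_ex[where P="\<lambda>A'. H ** A' = mat 1 \<and> A' ** H = mat 1", THEN conjunct1])
    have HHiv: "H *v (Hi *v y) = y" for y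
      by (simp add: matrix_vector_mul_assoc HHi)
    define u0 where "u0 = Hi *v (transpose A *v b t)"
    have e: "H *v u0 = transpose A *v b t"
      unfolding u0_def by (rule HHiv)
    have "f t = (\<lambda>u. (1/2)*(norm(A *v u - b t))\<^sup>2 + (0/2)*(norm(u - 0))\<^sup>2)"
      by (simp add: f_def)
    then have "uo t = u0"
      unfolding uo_def using argmin_char[of 0 A u0 "b t" 0] Ainj e H_def by simp
    then show ?thesis using e by simp
  qed
  have us_eq: "M *v us t = transpose A *v b t + lam *\<^sub>R c t" for t
  proof -
    define u0 where "u0 = Mi *v (transpose A *v b t + lam *\<^sub>R c t)"
    have e: "M *v u0 = transpose A *v b t + lam *\<^sub>R c t"
      by (simp only: u0_def MMiv)
    have "us t = u0"
      unfolding us_def f_def using argmin_char[of lam A u0 "b t" "c t"] Ainj e lam Mv H_def by simp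
    then show ?thesis using e by simp
  qed
  have Mi_us: "us t = Mi *v (transpose A *v b t + lam *\<^sub>R c t)" for t
    using us_eq[of t] Minj
    by (metis (no_types, lifting) MMiv eq_iff_diff_eq_0 matrix_vector_mult_diff_distrib)
  have diff: "us t - us s = (Mi ** H) *v (uo t - uo s) + (lam *\<^sub>R Mi) *v (c t - c s)" for t s
  proof -
    have "us t - us s = Mi *v ((transpose A *v b t + lam *\<^sub>R c t) - (transpose A *v b s + lam *\<^sub>R c s))"
      by (simp add: Mi_us matrix_vector_mult_diff_distrib)
    also have "(transpose A *v b t + lam *\<^sub>R c t) - (transpose A *v b s + lam *\<^sub>R c s)
       = H *v (uo t - uo s) + lam *\<^sub>R (c t - c s)"
      by (simp only: uo_eq[symmetric] matrix_vector_mult_diff_distrib) (simp add: algebra_simps)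
    finally show ?thesis
      by (simp add: matrix_vector_right_distrib matrix_vector_mul_assoc[symmetric] scaleR_mv matrix_vector_mult_scaleR)
  qed
  have kb: "norm ((Mi ** H) *v x) \<le> L / (\<mu> + lam) * norm x" for x
  proof -
    define y where "y = (Mi ** H) *v x"
    have My: "M *v y = H *v x" by (simp add: y_def matrix_vector_mul_assoc[symmetric] MMiv)
    have "(\<mu> + lam) * (norm y)\<^sup>2 \<le> y \<bullet> (H *v x)" using Mlo[of y] My by simp
    also have "\<dots> = (A *v y) \<bullet> (A *v x)" by (rule Hq)
    also have "\<dots> \<le> norm (A *v y) * norm (A *v x)" by (rule norm_cauchy_schwarz)
    also have "\<dots> \<le> (sqrt L * norm y) * (sqrt L * norm x)"
    proof -
      have "norm (A *v z) \<le> sqrt L * norm z" for z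
      proof -
        have "(norm (A *v z))\<^sup>2 \<le> L * (norm z)\<^sup>2" using hi[of z] Hq[of z z] by (simp add: power2_norm_eq_inner)
        then have "sqrt ((norm (A *v z))\<^sup>2) \<le> sqrt (L * (norm z)\<^sup>2)" by (rule real_sqrt_le_mono)
        then show ?thesis by (simp add: real_sqrt_mult)
      qed
      then show ?thesis using assms(7,8) by (intro mult_mono) auto
    qed
    also have "\<dots> = L * norm y * norm x" using assms(7,8) by (simp add: algebra_simps)
    finally have "(\<mu> + lam) * (norm y)\<^sup>2 \<le> L * norm y * norm x" .
    moreover have "0 \<le> L" using assms(7,8) by linarith
    ultimately have "(\<mu> + lam) * norm y \<le> L * norm x"
      by (cases "y = 0") (auto simp: power2_eq_square assms(7) lam intro: add_nonneg_nonneg)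
    then show ?thesis using assms(7) lam unfolding y_def
      by (simp add: pos_le_divide_eq mult.commute)
  qed
  have ab: "norm ((lam *\<^sub>R Mi) *v x) \<le> lam / (\<mu> + lam) * norm x" for x
  proof -
    define y where "y = (lam *\<^sub>R Mi) *v x"
    have My: "M *v y = lam *\<^sub>R x" by (simp add: y_def scaleR_mv matrix_vector_mult_scaleR MMiv)
    have "(\<mu> + lam) * (norm y)\<^sup>2 \<le> y \<bullet> (lam *\<^sub>R x)" using Mlo[of y] My by simp
    also have "\<dots> = lam * (y \<bullet> x)" by simp
    also have "\<dots> \<le> lam * (norm y * norm x)" using lam by (simp add: mult_left_mono norm_cauchy_schwarz)
    finally have "(\<mu> + lam) * (norm y)\<^sup>2 \<le> lam * norm y * norm x" by simp
    then have "(\<mu> + lam) * norm y \<le> lam * norm x"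
      by (cases "y = 0") (auto simp: power2_eq_square assms(7) lam intro: add_nonneg_nonneg)
    then show ?thesis using assms(7) lam unfolding y_def
      by (simp add: pos_le_divide_eq mult.commute)
  qed
  have kap: "\<kappa> \<le> L / (\<mu> + lam)"
    unfolding \<kappa>_def op_norm_def M_def[symmetric] Mi_def[symmetric] by (rule onorm_le) (rule kb)
  have alp: "\<alpha> \<le> lam / (\<mu> + lam)"
    unfolding \<alpha>_def op_norm_def M_def[symmetric] Mi_def[symmetric] by (rule onorm_le) (rule ab)
  have step: "norm (us t - us s) \<le> \<kappa> * norm (uo t - uo s) + \<alpha> * norm (c t - c s)" for t s
  proof -
    have "norm (us t - us s) \<le> norm ((Mi ** H) *v (uo t - uo s)) + norm ((lam *\<^sub>R Mi) *v (c t - c s))"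
      unfolding diff by (rule norm_triangle_ineq)
    also have "\<dots> \<le> \<kappa> * norm (uo t - uo s) + \<alpha> * norm (c t - c s)"
      unfolding \<kappa>_def \<alpha>_def op_norm_def M_def[symmetric] Mi_def[symmetric]
      by (intro add_mono onorm matrix_vector_mul_bounded_linear)
    finally show ?thesis .
  qed
  have sum: "(\<Sum>t=2..T. norm (us t - us (t-1)))
            \<le> \<kappa> * (\<Sum>t=2..T. norm (uo t - uo (t-1))) + \<alpha> * (\<Sum>t=2..T. norm (c t - c (t-1)))"
  proof -
    have "(\<Sum>t=2..T. norm (us t - us (t-1))) \<le> (\<Sum>t=2..T. \<kappa> * norm (uo t - uo (t-1)) + \<alpha> * norm (c t - c (t-1)))"
      by (rule sum_mono) (rule step)
    also have "\<dots> = \<kappa> * (\<Sum>t=2..T. norm (uo t - uo (t-1))) + \<alpha> * (\<Sum>t=2..T. norm (c t - c (t-1)))"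
      by (simp add: sum.distrib sum_distrib_left)
    finally show ?thesis .
  qed
  show ?thesis using step kap alp sum by blast
qed

end
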